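(* Let $n$ be even, let $j$ be a positive integer with $\eta := j/n \leq 1/10$, let $H = J(n,n/2,j)$, let $d = {n/2 \choose j}^2$, and let $\tilde{\mu}_2$ be the second smallest eigenvalue (counted with multiplicity) of the normalised Laplacian $I - A_H/d$ of $H$, where $A_H$ is the adjacency matrix of $H$. Then for every $\mathcal{A} \subset {[n] \choose n/2}$, $$\left|\left\{(A,B) \in {[n] \choose n/2}^2:\ |A \Delta B| = 2j,\ A \in \mathcal{A},\ B \notin \mathcal{A}\right\}\right| = e_H(\mathcal{A},\mathcal{A}^c) \geq d\, \tilde{\mu}_2\, \mu(\mathcal{A})(1-\mu(\mathcal{A})){n \choose n/2} \geq \tfrac{1}{2}\eta\, \mu(\mathcal{A})(1-\mu(\mathcal{A}))\, d{n \choose n/2},$$ and consequently $$\frac{\left|\left\{(A,B) \in {[n] \choose n/2}^2:\ |A \Delta B| = 2j,\ A \in \mathcal{A},\ B \notin \mathcal{A}\right\}\right|}{\left|\left\{(A,B) \in {[n] \choose n/2}^2:\ |A \Delta B| = 2j\right\}\right|} \geq \tfrac{1}{2}\eta\, \mu(\mathcal{A})(1-\mu(\mathcal{A})).$$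
   Context: For $1 \leq j \leq k \leq n$, the Johnson graph $J(n,k,j)$ has vertex set ${[n] \choose k}$ (the $k$-element subsets of $[n]=\{1,\dots,n\}$), with two $k$-sets adjacent iff their symmetric difference has size $2j$; $J(n,n/2,j)$ is $d$-regular with $d={n/2 \choose j}^2$. $e_H(\mathcal{A},\mathcal{A}^c)$ denotes the number of edges of $H$ with one endpoint in $\mathcal{A}$ and the other in $\mathcal{A}^c = {[n] \choose n/2}\setminus\mathcal{A}$. $\mu(\mathcal{A}) = |\mathcal{A}|/{n \choose n/2}$. *)

theory Defs
  imports Complex_Main "HOL-Computational_Algebra.Polynomial" "HOL-Combinatorics.Permutations"
    "HOL-Library.Multiset"
begin

definition johnson_vertices :: "nat \<Rightarrow> nat \<Rightarrow> nat set set" where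
  "johnson_vertices n k = {A. A \<subseteq> {1..n} \<and> card A = k}"

definition symdiff :: "'a set \<Rightarrow> 'a set \<Rightarrow> 'a set" where
  "symdiff A B = (A - B) \<union> (B - A)"

definition johnson_adj :: "nat \<Rightarrow> nat set \<Rightarrow> nat set \<Rightarrow> bool" where
  "johnson_adj j A B \<longleftrightarrow> card (symdiff A B) = 2 * j"

definition johnson_edges :: "nat \<Rightarrow> nat \<Rightarrow> nat \<Rightarrow> nat set set set" where
  "johnson_edges n k j = {{A, B} | A B. A \<in> johnson_vertices n k \<and> B \<in> johnson_vertices n k \<and> johnson_adj j A B}"

definition johnson_e :: "nat \<Rightarrow> nat \<Rightarrow> nat \<Rightarrow> nat set set \<Rightarrow> nat set set \<Rightarrow> nat" where
  "johnson_e n k j S T = card {e \<in> johnson_edges n k j. \<exists>A\<in>S. \<exists>B\<in>T. e = {A, B}}"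

definition johnson_adjmat :: "nat \<Rightarrow> nat set \<Rightarrow> nat set \<Rightarrow> real" where
  "johnson_adjmat j A B = (if johnson_adj j A B then 1 else 0)"

text \<open>Characteristic polynomial det(x I - M) of a square matrix M indexed by a finite set V,
  written out via the Leibniz formula.\<close>
definition charpoly_on :: "'a set \<Rightarrow> ('a \<Rightarrow> 'a \<Rightarrow> real) \<Rightarrow> real poly" where
  "charpoly_on V M = (\<Sum>p | p permutes V. of_int (sign p) *
      (\<Prod>v\<in>V. [: - M v (p v), (if p v = v then 1 else 0) :]))"

definition eigenvalues_sorted :: "'a set \<Rightarrow> ('a \<Rightarrow> 'a \<Rightarrow> real) \<Rightarrow> real list" where
  "eigenvalues_sorted V M = sorted_list_of_multiset (proots (charpoly_on V M))"

definition johnson_norm_laplacian :: "nat \<Rightarrow> nat \<Rightarrow> nat set \<Rightarrow> nat set \<Rightarrow> real" where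
  "johnson_norm_laplacian n j A B =
     (if A = B then 1 else 0) - johnson_adjmat j A B / real (((n div 2) choose j)^2)"

definition mu2_tilde :: "nat \<Rightarrow> nat \<Rightarrow> real" where
  "mu2_tilde n j = eigenvalues_sorted (johnson_vertices n (n div 2)) (johnson_norm_laplacian n j) ! 1"

end

theory Submission
  imports Defs "Jordan_Normal_Form.Schur_Decomposition"
begin


lemma conj_real_vec[simp]: "conjugate (w :: real vec) = w"
  by (rule eq_vecI) auto

lemma on_complete:
  fixes v :: "real vec"
  assumes v: "v \<in> carrier_vec n" and v1: "v \<bullet> v = 1"
  shows "\<exists>W \<in> carrier_mat n n. transpose_mat W * W = 1\<^sub>m n \<and> col W 0 = v"
proof -
  have v0: "v \<noteq> 0\<^sub>v n" using v1 v by auto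
  interpret cof_vec_space n "TYPE(real)" .
  define b where "b = basis_completion v"
  from basis_completion[OF v v0, folded b_def]
  have span_b: "span (set b) = carrier_vec n" and dist_b: "distinct b" 
    and indep: "\<not> lin_dep (set b)" and b: "set b \<subseteq> carrier_vec n" and hdb: "hd b = v" 
    and len_b: "length b = n" by auto
  have n: "n > 0" using v0 v by (cases n) auto
  from hdb len_b n obtain vs where bv: "b = v # vs" by (cases b, auto)
  define ws where "ws = gram_schmidt n b"
  from gram_schmidt_result[OF b dist_b indep refl, folded ws_def]
  have ws: "set ws \<subseteq> carrier_vec n" "corthogonal ws" "length ws = n" 
    by (auto simp: len_b)
  from gram_schmidt_hd[OF v, of vs, folded bv] have hdws: "hd ws = v" unfolding ws_def .
  hence ws0: "ws ! 0 = v" using n ws(3) by (cases ws) auto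
  have wsc: "ws ! i \<in> carrier_vec n" if "i < n" for i using ws that by auto
  have orth: "ws ! i \<bullet> ws ! j = 0 \<longleftrightarrow> i \<noteq> j" if "i < n" "j < n" for i j
    using corthogonalD[OF ws(2), of i j] that ws(3) by simp
  define nm where "nm i = sqrt (ws ! i \<bullet> ws ! i)" for i
  have sq: "ws ! i \<bullet> ws ! i \<ge> 0" for i 
    by (simp add: scalar_prod_def sum_nonneg)
  have nm0: "nm i > 0" if "i < n" for i
    using orth[OF that that] sq[of i] unfolding nm_def by auto
  define W where "W = mat n n (\<lambda>(i,j). (ws ! j) $ i / nm j)"
  have W: "W \<in> carrier_mat n n" unfolding W_def by auto
  have "transpose_mat W * W = 1\<^sub>m n"
  proof (rule eq_matI)
    fix i j assume i: "i < dim_row (1\<^sub>m n)" and j: "j < dim_col (1\<^sub>m n)"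
    hence i: "i < n" and j: "j < n" by auto
    have "(transpose_mat W * W) $$ (i,j) = (\<Sum>l<n. (ws ! i) $ l / nm i * ((ws ! j) $ l / nm j))"
      using i j W unfolding W_def by (simp add: scalar_prod_def row_def col_def atLeast0LessThan)
    also have "\<dots> = (ws ! i \<bullet> ws ! j) / (nm i * nm j)"
      using wsc[OF i] wsc[OF j] by (simp add: scalar_prod_def sum_divide_distrib atLeast0LessThan)
    also have "\<dots> = 1\<^sub>m n $$ (i,j)"
    proof (cases "i = j")
      case True
      then show ?thesis using nm0[OF i] sq[of i] i unfolding nm_def
        by (simp add: real_sqrt_mult[symmetric])
    next
      case False
      then show ?thesis using orth[OF i j] i j by simp
    qed
    finally show "(transpose_mat W * W) $$ (i,j) = 1\<^sub>m n $$ (i,j)" .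
  qed (use W in auto)
  moreover have "col W 0 = v"
    using n v v1 ws0 unfolding W_def nm_def by (intro eq_vecI) auto
  ultimately show ?thesis using W by blast
qed

definition diagm :: "nat \<Rightarrow> real list \<Rightarrow> real mat" where
  "diagm n es = mat n n (\<lambda>(i,j). if i = j then es ! i else 0)"

lemma diagm_carrier[simp]: "diagm n es \<in> carrier_mat n n"
  by (simp add: diagm_def)

lemma spectral_real:
  fixes A :: "real mat"
  assumes "A \<in> carrier_mat n n" "transpose_mat A = A" "char_poly A = (\<Prod>e\<leftarrow>es. [:-e, 1:])"
  shows "\<exists>P \<in> carrier_mat n n. transpose_mat P * P = 1\<^sub>m n \<and> A * P = P * diagm n es"
  using assms
proof (induction es arbitrary: n A)
  case Nil
  with degree_monic_char_poly[of A n] have "n = 0" by auto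
  then show ?case using Nil by (intro bexI[of _ "1\<^sub>m 0"]) (auto simp: diagm_def)
next
  case (Cons e es n A)
  have A: "A \<in> carrier_mat n n" and sym: "transpose_mat A = A" using Cons by auto
  have cp: "char_poly A = [: -e, 1 :] * (\<Prod>e \<leftarrow> es. [:- e, 1:])" using Cons by auto
  have mon: "monic (\<Prod>e\<leftarrow> es. [:- e, 1:])" by (rule monic_prod_list, auto)
  have deg: "degree (char_poly A) = Suc (degree (\<Prod>e\<leftarrow> es. [:- e, 1:]))" unfolding cp
    by (subst degree_mult_eq, insert mon, auto)
  with degree_monic_char_poly[OF A] have n: "n \<noteq> 0" by auto
  have ev: "eigenvalue A e" unfolding eigenvalue_root_char_poly[OF A] cp by simp
  define v0 where "v0 = find_eigenvector A e"
  from find_eigenvector[OF A ev] have "eigenvector A v0 e" unfolding v0_def .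
  hence v0c: "v0 \<in> carrier_vec n" and v00: "v0 \<noteq> 0\<^sub>v n" and Av0: "A *\<^sub>v v0 = e \<cdot>\<^sub>v v0"
    using A unfolding eigenvector_def by auto
  have sq: "v0 \<bullet> v0 > 0"
  proof -
    have "v0 \<bullet> v0 \<ge> 0" by (simp add: scalar_prod_def sum_nonneg)
    moreover have "v0 \<bullet> v0 \<noteq> 0" using v00 v0c conjugate_square_eq_0_vec[of v0 n] by auto
    ultimately show ?thesis by auto
  qed
  define v where "v = (1 / sqrt (v0 \<bullet> v0)) \<cdot>\<^sub>v v0"
  have vc: "v \<in> carrier_vec n" unfolding v_def using v0c by auto
  have v1: "v \<bullet> v = 1" unfolding v_def using v0c sq
    by (simp add: smult_scalar_prod_distrib scalar_prod_smult_distrib)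
  have Av: "A *\<^sub>v v = e \<cdot>\<^sub>v v" unfolding v_def using Av0 A v0c
    by (simp add: mult_mat_vec smult_smult_assoc mult.commute)
  from on_complete[OF vc v1] obtain W where W: "W \<in> carrier_mat n n"
    and WtW: "transpose_mat W * W = 1\<^sub>m n" and W0: "col W 0 = v" by blast
  have WWt: "W * transpose_mat W = 1\<^sub>m n"
    using mat_mult_left_right_inverse[OF _ W WtW] W by auto
  define A' where "A' = transpose_mat W * A * W"
  have A': "A' \<in> carrier_mat n n" unfolding A'_def using A W by auto
  have symA': "transpose_mat A' = A'"
  proof -
    have "transpose_mat A' = transpose_mat (transpose_mat W * (A * W))"
      unfolding A'_def using A W by (simp add: assoc_mult_mat[of _ n n _ n _ n])
    also have "\<dots> = transpose_mat (A * W) * W"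
      using A W by (subst transpose_mult[of "transpose_mat W" n n "A * W" n]) auto
    also have "\<dots> = (transpose_mat W * A) * W"
      using A W sym by (subst transpose_mult[of A n n W n]) auto
    finally show ?thesis unfolding A'_def .
  qed
  have AW: "A * W = W * A'"
  proof -
    have "W * A' = (W * transpose_mat W) * A * W" unfolding A'_def using A W
      by (simp add: assoc_mult_mat[of _ n n _ n _ n])
    also have "\<dots> = A * W" unfolding WWt using A by simp
    finally show ?thesis by simp
  qed
  have A'col: "A' $$ (i, 0) = (if i = 0 then e else 0)" if i: "i < n" for i
  proof -
    have "A' $$ (i, 0) = (transpose_mat W * (A * W)) $$ (i, 0)"
      unfolding A'_def using A W by (simp add: assoc_mult_mat[of _ n n _ n _ n])
    also have "\<dots> = row (transpose_mat W) i \<bullet> (A *\<^sub>v col W 0)"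
      using A W i n by (simp add: col_mult2 mult_mat_vec_def)
    also have "\<dots> = e * (row (transpose_mat W) i \<bullet> col W 0)"
      unfolding W0 Av using W i vc by simp
    also have "row (transpose_mat W) i \<bullet> col W 0 = (transpose_mat W * W) $$ (i, 0)"
      using W i n by simp
    also have "\<dots> = (if i = 0 then 1 else 0)" unfolding WtW using i n by simp
    finally show ?thesis by simp
  qed
  have A'row: "A' $$ (0, j) = (if j = 0 then e else 0)" if j: "j < n" for j
  proof -
    have "A' $$ (0, j) = transpose_mat A' $$ (j, 0)" using A' j n by simp
    also have "\<dots> = (if j = 0 then e else 0)" unfolding symA' using A'col[OF j] .
    finally show ?thesis .
  qed
  define m where "m = n - 1"
  have nm: "n = 1 + m" using n unfolding m_def by auto
  define A3 where "A3 = mat m m (\<lambda>(i,j). A' $$ (Suc i, Suc j))"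
  have A3: "A3 \<in> carrier_mat m m" unfolding A3_def by auto
  have A'blk: "A' = four_block_mat (mat 1 1 (\<lambda>_. e)) (0\<^sub>m 1 m) (0\<^sub>m m 1) A3"
    by (rule eq_matI) (use A' nm A'col A'row in \<open>auto simp: A3_def\<close>)
  have symA3: "transpose_mat A3 = A3"
  proof (rule eq_matI)
    fix i j assume "i < dim_row A3" "j < dim_col A3"
    hence "i < m" "j < m" using A3 by auto
    thus "transpose_mat A3 $$ (i, j) = A3 $$ (i, j)"
      using arg_cong[OF symA', of "\<lambda>M. M $$ (Suc j, Suc i)"] A' nm unfolding A3_def by auto
  qed (use A3 in auto)
  have simAA': "similar_mat A' A" unfolding similar_mat_def
    by (rule exI[of _ "transpose_mat W"], rule exI[of _ W])
       (use A A' W WtW WWt in \<open>auto simp: similar_mat_wit_def A'_def\<close>)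
  from char_poly_similar[OF simAA'] cp
  have "char_poly A' = [: -e,1 :] * (\<Prod> e \<leftarrow> es. [:- e, 1:])" by simp
  also have "char_poly A' = char_poly (mat 1 1 (\<lambda>_. e)) * char_poly A3"
    unfolding A'blk by (rule char_poly_four_block_zeros_col) (use A3 in auto)
  also have "char_poly (mat 1 1 (\<lambda>_. e)) = [: -e,1 :]"
    by (simp add: char_poly_defs det_def sign_def)
  finally have cp3: "char_poly A3 = (\<Prod> e \<leftarrow> es. [:- e, 1:])"
    by (metis mult_cancel_left pCons_eq_0_iff zero_neq_one)
  from Cons.IH[OF A3 symA3 cp3] obtain P3 where P3: "P3 \<in> carrier_mat m m"
    and P3tP3: "transpose_mat P3 * P3 = 1\<^sub>m m" and AP3: "A3 * P3 = P3 * diagm m es" by blast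
  define Pb where "Pb = four_block_mat (1\<^sub>m 1) (0\<^sub>m 1 m) (0\<^sub>m m 1) P3"
  have Pb: "Pb \<in> carrier_mat n n" unfolding Pb_def nm using P3 by auto
  have PbtPb: "transpose_mat Pb * Pb = 1\<^sub>m n"
  proof -
    have "transpose_mat Pb = four_block_mat (1\<^sub>m 1) (0\<^sub>m 1 m) (0\<^sub>m m 1) (transpose_mat P3)"
      unfolding Pb_def by (subst transpose_four_block_mat[OF one_carrier_mat zero_carrier_mat zero_carrier_mat P3]) simp
    also have "\<dots> * Pb = 1\<^sub>m n" unfolding Pb_def nm
      by (subst mult_four_block_mat[OF one_carrier_mat zero_carrier_mat zero_carrier_mat _ one_carrier_mat zero_carrier_mat zero_carrier_mat P3])
         (use P3 P3tP3 in auto)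
    finally show ?thesis .
  qed
  have D: "diagm n (e # es) = four_block_mat (mat 1 1 (\<lambda>_. e)) (0\<^sub>m 1 m) (0\<^sub>m m 1) (diagm m es)"
    by (rule eq_matI) (auto simp: diagm_def nm)
  have A'Pb: "A' * Pb = Pb * diagm n (e # es)"
    unfolding D A'blk Pb_def
    by (subst mult_four_block_mat[OF _ zero_carrier_mat zero_carrier_mat A3 one_carrier_mat zero_carrier_mat zero_carrier_mat P3],
        simp, subst mult_four_block_mat[OF one_carrier_mat zero_carrier_mat zero_carrier_mat P3 _ zero_carrier_mat zero_carrier_mat],
        simp, use P3 A3 AP3 in \<open>auto simp: left_mult_zero_mat[OF diagm_carrier]\<close>)
  define P where "P = W * Pb"
  have P: "P \<in> carrier_mat n n" unfolding P_def using W Pb by auto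
  have "transpose_mat P * P = transpose_mat Pb * (transpose_mat W * W) * Pb"
    unfolding P_def using W Pb by (simp add: transpose_mult[of W n n Pb n] assoc_mult_mat[of _ n n _ n _ n])
  also have "\<dots> = 1\<^sub>m n" unfolding WtW using Pb PbtPb by simp
  finally have PtP: "transpose_mat P * P = 1\<^sub>m n" .
  have "A * P = (A * W) * Pb" unfolding P_def using A W Pb by simp
  also have "\<dots> = W * (A' * Pb)" unfolding AW using A' W Pb by simp
  also have "\<dots> = P * diagm n (e # es)" unfolding A'Pb P_def using W Pb
    by (simp add: assoc_mult_mat[OF W Pb diagm_carrier])
  finally show ?case using P PtP by blast
qed

lemma real_sym_eigenvalue_real:
  fixes A :: "real mat" and a :: complex
  assumes A: "A \<in> carrier_mat n n" and sym: "transpose_mat A = A"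
    and ev: "eigenvalue (map_mat complex_of_real A) a"
  shows "a = complex_of_real (Re a)"
proof -
  let ?Ac = "map_mat complex_of_real A"
  have Ac: "?Ac \<in> carrier_mat n n" using A by auto
  obtain v where "eigenvector ?Ac v a" using ev unfolding eigenvalue_def by blast
  hence v: "v \<in> carrier_vec n" and v0: "v \<noteq> 0\<^sub>v n" and Av: "?Ac *\<^sub>v v = a \<cdot>\<^sub>v v"
    using Ac unfolding eigenvector_def by auto
  have symij: "A $$ (i,j) = A $$ (j,i)" if "i < n" "j < n" for i j
    using arg_cong[OF sym, of "\<lambda>M. M $$ (j,i)"] that A by auto
  define s where "s = (\<Sum>i<n. cnj (v $ i) * (\<Sum>j<n. of_real (A $$ (i,j)) * v $ j))"
  have "s = (\<Sum>i<n. cnj (v $ i) * (?Ac *\<^sub>v v) $ i)"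
    unfolding s_def using A v
    by (intro sum.cong refl) (auto simp: scalar_prod_def row_def atLeast0LessThan mult.commute)
  also have "\<dots> = a * (\<Sum>i<n. cnj (v $ i) * v $ i)"
    unfolding Av using v by (auto simp: sum_distrib_left intro!: sum.cong)
  finally have s1: "s = a * (\<Sum>i<n. cnj (v $ i) * v $ i)" .
  have "cnj s = (\<Sum>i<n. v $ i * (\<Sum>j<n. of_real (A $$ (i,j)) * cnj (v $ j)))"
    unfolding s_def by (simp add: sum_distrib_left)
  also have "\<dots> = (\<Sum>i<n. \<Sum>j<n. v $ i * of_real (A $$ (i,j)) * cnj (v $ j))"
    by (simp add: sum_distrib_left mult.assoc)
  also have "\<dots> = (\<Sum>j<n. \<Sum>i<n. v $ i * of_real (A $$ (i,j)) * cnj (v $ j))"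
    by (rule sum.swap)
  also have "\<dots> = s" unfolding s_def
    by (auto simp: sum_distrib_left symij mult.commute mult.left_commute intro!: sum.cong)
  finally have sreal: "cnj s = s" .
  define t where "t = (\<Sum>i<n. cnj (v $ i) * v $ i)"
  have cz: "cnj z * z = complex_of_real ((cmod z)^2)" for z
    by (subst complex_norm_square) (simp add: mult.commute)
  have t: "t = of_real (\<Sum>i<n. (cmod (v $ i))^2)"
    unfolding t_def of_real_sum by (rule sum.cong[OF refl], rule cz)
  obtain i where i: "i < n" "v $ i \<noteq> 0" using v v0 by (metis eq_vecI carrier_vecD index_zero_vec)
  have "(\<Sum>i<n. (cmod (v $ i))^2) > 0"
    by (rule sum_pos2[of _ i]) (use i in auto)
  hence t0: "Re t > 0" "Im t = 0" unfolding t by auto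
  have "cnj (a * t) = a * t" using sreal s1 unfolding t_def by simp
  hence "Im (a * t) = 0" by (metis cnj.sel(2) complex.expand neg_equal_zero cnj.sel(1))
  hence "Im a * Re t = 0" using t0 by simp
  hence "Im a = 0" using t0 by simp
  thus ?thesis by (simp add: complex_eq_iff)
qed

lemma real_sym_split:
  fixes A :: "real mat"
  assumes A: "A \<in> carrier_mat n n" and sym: "transpose_mat A = A"
  shows "\<exists>rs. char_poly A = (\<Prod>r\<leftarrow>rs. [:-r, 1:])"
proof -
  let ?Ac = "map_mat complex_of_real A"
  have Ac: "?Ac \<in> carrier_mat n n" using A by auto
  obtain as where cpc: "char_poly ?Ac = (\<Prod>a\<leftarrow>as. [:-a, 1:])"
    using char_poly_factorized[OF Ac] by blast
  have real: "a = complex_of_real (Re a)" if "a \<in> set as" for a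
  proof -
    have "poly (char_poly ?Ac) a = 0" unfolding cpc using that
      by (auto simp: poly_prod_list prod_list_zero_iff)
    hence "eigenvalue ?Ac a" using eigenvalue_root_char_poly[OF Ac] by auto
    thus ?thesis by (rule real_sym_eigenvalue_real[OF A sym])
  qed
  define rs where "rs = map Re as"
  have "map_poly complex_of_real (char_poly A) = char_poly ?Ac"
    using of_real_hom.char_poly_hom[OF A, where 'a=complex] by simp
  also have "\<dots> = map_poly complex_of_real (\<Prod>r\<leftarrow>rs. [:-r, 1:])"
  proof -
    interpret mp: map_poly_comm_ring_hom "complex_of_real :: real \<Rightarrow> complex" ..
    show ?thesis unfolding cpc rs_def using real
    proof (induction as)
      case (Cons a as)
      have h: "map_poly complex_of_real [:- Re a, 1:] = [:-a, 1:]"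
        using Cons.prems[of a] by simp
      have ih: "(\<Prod>a\<leftarrow>as. [:- a, 1:]) = map_poly complex_of_real (\<Prod>r\<leftarrow>map Re as. [:- r, 1:])"
        using Cons by simp
      have "map_poly complex_of_real (\<Prod>r\<leftarrow>map Re (a # as). [:- r, 1:])
         = map_poly complex_of_real [:- Re a, 1:] * map_poly complex_of_real (\<Prod>r\<leftarrow>map Re as. [:- r, 1:])"
        by (simp only: list.map prod_list.Cons mp.hom_mult)
      then show ?case unfolding h ih[symmetric] by simp
    qed simp
  qed
  finally have eq: "map_poly complex_of_real (char_poly A) = map_poly complex_of_real (\<Prod>r\<leftarrow>rs. [:-r, 1:])" .
  have "char_poly A = (\<Prod>r\<leftarrow>rs. [:-r, 1:])"
  proof (rule poly_eqI)
    fix i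
    from arg_cong[OF eq, of "\<lambda>p. coeff p i"] show "coeff (char_poly A) i = coeff (\<Prod>r\<leftarrow>rs. [:-r, 1:]) i"
      by (simp add: coeff_map_poly)
  qed
  thus ?thesis by blast
qed

lemma charpoly_on_bridge:
  assumes g: "bij_betw g {0..<N} V"
  shows "charpoly_on V M = char_poly (mat N N (\<lambda>(i,j). M (g i) (g j)))"
proof -
  let ?A = "mat N N (\<lambda>(i,j). M (g i) (g j))"
  have A: "?A \<in> carrier_mat N N" by auto
  have inj: "inj_on g {0..<N}" using g by (auto simp: bij_betw_def)
  have ginv: "bij_betw (inv_into {0..<N} g) V {0..<N}" by (rule bij_betw_inv_into[OF g])
  have gg: "g (inv_into {0..<N} g x) = x" if "x \<in> V" for x
    using g that by (meson bij_betw_inv_into_right)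
  have gg2: "inv_into {0..<N} g (g x) = x" if "x \<in> {0..<N}" for x
    using inj that by (simp add: inv_into_f_f)
  have "char_poly ?A = (\<Sum>p | p permutes {0..<N}. signof p *
      (\<Prod>i = 0..<N. char_poly_matrix ?A $$ (i, p i)))"
    unfolding char_poly_def by (rule det_def') (use A in simp)
  also have "\<dots> = (\<Sum>p | p permutes {0..<N}. of_int (sign p) *
      (\<Prod>i = 0..<N. [: - M (g i) (g (p i)), (if p i = i then 1 else 0) :]))"
  proof (rule sum.cong[OF refl])
    fix p assume p: "p \<in> {p. p permutes {0..<N}}"
    have "p i < N" if "i < N" for i using p that permutes_in_image by fastforce
    hence "char_poly_matrix ?A $$ (i, p i) = [: - M (g i) (g (p i)), (if p i = i then 1 else 0) :]"
      if "i \<in> {0..<N}" for i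
      using that unfolding char_poly_matrix_def by (auto simp: one_pCons)
    thus "signof p * (\<Prod>i = 0..<N. char_poly_matrix ?A $$ (i, p i)) = of_int (sign p) *
      (\<Prod>i = 0..<N. [: - M (g i) (g (p i)), (if p i = i then 1 else 0) :])"
      by simp
  qed
  also have "\<dots> = charpoly_on V M"
    unfolding charpoly_on_def
  proof (rule sum.reindex_bij_witness[of _ "map_permutation V (inv_into {0..<N} g)" "map_permutation {0..<N} g"])
    fix q assume q: "q \<in> {q. q permutes V}"
    show "map_permutation {0..<N} g (map_permutation V (inv_into {0..<N} g) q) = q"
      by (rule map_permutation_compose_inv[OF ginv]) (use q gg in auto)
    show "map_permutation V (inv_into {0..<N} g) q \<in> {p. p permutes {0..<N}}"
      using map_permutation_permutes[OF ginv] q by auto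
  next
    fix p assume p: "p \<in> {p. p permutes {0..<N}}"
    show "map_permutation V (inv_into {0..<N} g) (map_permutation {0..<N} g p) = p"
      by (rule map_permutation_compose_inv[OF g]) (use p gg2 in auto)
    show "map_permutation {0..<N} g p \<in> {q. q permutes V}"
      using map_permutation_permutes[OF g] p by auto
    let ?q = "map_permutation {0..<N} g p"
    have qg: "?q (g i) = g (p i)" if "i \<in> {0..<N}" for i
      by (rule map_permutation_apply[OF inj that])
    have pi: "p i \<in> {0..<N}" if "i \<in> {0..<N}" for i using p that permutes_in_image by fastforce
    have "sign ?q = sign p" by (rule sign_map_permutation[OF inj]) (use p in auto)
    moreover have "(\<Prod>v\<in>V. [:- M v (?q v), if ?q v = v then 1 else 0:])
        = (\<Prod>i = 0..<N. [: - M (g i) (g (p i)), (if p i = i then 1 else 0) :])"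
    proof -
      have "(\<Prod>v\<in>V. [:- M v (?q v), if ?q v = v then 1 else 0:])
          = (\<Prod>i\<in>{0..<N}. [:- M (g i) (?q (g i)), if ?q (g i) = g i then 1 else 0:])"
        using prod.reindex[OF inj, of "\<lambda>v. [:- M v (?q v), if ?q v = v then 1 else 0:]"]
          g by (simp add: bij_betw_def)
      also have "\<dots> = (\<Prod>i = 0..<N. [: - M (g i) (g (p i)), (if p i = i then 1 else 0) :])"
        by (rule prod.cong[OF refl]) (use qg pi inj in \<open>auto simp: inj_on_eq_iff\<close>)
      finally show ?thesis .
    qed
    ultimately show "of_int (sign ?q) * (\<Prod>v\<in>V. [:- M v (?q v), if ?q v = v then 1 else 0:])
       = of_int (sign p) * (\<Prod>i = 0..<N. [: - M (g i) (g (p i)), (if p i = i then 1 else 0) :])"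
      by simp
  qed
  finally show ?thesis by simp
qed

lemma proots_linear_prod: "proots (\<Prod>r\<leftarrow>rs. [:-r, 1:]) = mset (rs :: real list)"
proof (induction rs)
  case (Cons r rs)
  have nz: "(\<Prod>r\<leftarrow>rs. [:-r, 1:]) \<noteq> (0 :: real poly)"
    by (auto simp: prod_list_zero_iff)
  have "proots (\<Prod>r\<leftarrow>r # rs. [:-r, 1:]) = proots [:-r, 1:] + proots (\<Prod>r\<leftarrow>rs. [:-r, 1:])"
    by (simp only: list.map prod_list.Cons, rule proots_mult) (use nz in auto)
  then show ?case using Cons by simp
qed simp

lemma prod_list_sort_linear: "(\<Prod>r\<leftarrow>sort rs. [:-r, 1:]) = (\<Prod>r\<leftarrow>(rs :: real list). [:-r, 1:])"
proof -
  have "(\<Prod>r\<leftarrow>sort rs. [:-r, 1:]) = prod_mset (mset (map (\<lambda>r. [:-r, 1:]) (sort rs)))"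
    by (rule prod_mset_prod_list[symmetric])
  also have "\<dots> = prod_mset (mset (map (\<lambda>r. [:-r, 1:]) rs))"
    by (simp only: mset_map mset_sort)
  also have "\<dots> = (\<Prod>r\<leftarrow>rs. [:-r, 1:])" by (rule prod_mset_prod_list)
  finally show ?thesis .
qed

lemma spectral_fun:
  fixes V :: "'a set" and L :: "'a \<Rightarrow> 'a \<Rightarrow> real"
  assumes fin: "finite V" and sym: "\<And>x y. x \<in> V \<Longrightarrow> y \<in> V \<Longrightarrow> L x y = L y x"
  defines "es \<equiv> eigenvalues_sorted V L"
  shows "\<exists>u :: nat \<Rightarrow> 'a \<Rightarrow> real. length es = card V \<and> sorted es \<and>
    (\<forall>i<card V. \<forall>l<card V. (\<Sum>x\<in>V. u i x * u l x) = (if i = l then 1 else 0)) \<and>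
    (\<forall>x\<in>V. \<forall>y\<in>V. (\<Sum>i<card V. u i x * u i y) = (if x = y then 1 else 0)) \<and>
    (\<forall>i<card V. \<forall>x\<in>V. (\<Sum>y\<in>V. L x y * u i y) = es ! i * u i x)"
proof -
  define N where "N = card V"
  obtain g where g: "bij_betw g {0..<N} V" using ex_bij_betw_nat_finite[OF fin] unfolding N_def by blast
  define h where "h = inv_into {0..<N} g"
  have inj: "inj_on g {0..<N}" using g by (auto simp: bij_betw_def)
  have hb: "bij_betw h V {0..<N}" unfolding h_def by (rule bij_betw_inv_into[OF g])
  have gh: "g (h x) = x" if "x \<in> V" for x
    using g that unfolding h_def by (meson bij_betw_inv_into_right)
  have hg: "h (g x) = x" if "x \<in> {0..<N}" for x
    using inj that unfolding h_def by (simp add: inv_into_f_f)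
  have hV: "h x < N" if "x \<in> V" for x using hb that by (auto simp: bij_betw_def)
  have gV: "g i \<in> V" if "i < N" for i using g that by (auto simp: bij_betw_def)
  define A where "A = mat N N (\<lambda>(i,j). L (g i) (g j))"
  have A: "A \<in> carrier_mat N N" unfolding A_def by auto
  have symA: "transpose_mat A = A"
  proof (rule eq_matI)
    fix i j assume "i < dim_row A" "j < dim_col A"
    hence "i < N" "j < N" using A by auto
    thus "transpose_mat A $$ (i, j) = A $$ (i, j)" unfolding A_def
      using sym[OF gV[of i] gV[of j]] by simp
  qed (use A in auto)
  obtain rs where rs: "char_poly A = (\<Prod>r\<leftarrow>rs. [:-r, 1:])" using real_sym_split[OF A symA] by blast
  have cpV: "charpoly_on V L = char_poly A" unfolding A_def by (rule charpoly_on_bridge[OF g, of L])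
  have es: "es = sort rs" unfolding es_def eigenvalues_sorted_def cpV rs proots_linear_prod by simp
  have cp2: "char_poly A = (\<Prod>r\<leftarrow>es. [:-r, 1:])" unfolding es rs prod_list_sort_linear ..
  have len: "length es = N"
    using degree_monic_char_poly[OF A] unfolding cp2 degree_linear_factors by simp
  from spectral_real[OF A symA cp2] obtain P where P: "P \<in> carrier_mat N N"
    and PtP: "transpose_mat P * P = 1\<^sub>m N" and AP: "A * P = P * diagm N es" by blast
  have PPt: "P * transpose_mat P = 1\<^sub>m N"
    using mat_mult_left_right_inverse[OF _ P PtP] P by auto
  define u where "u i x = P $$ (h x, i)" for i x
  have reidx: "(\<Sum>x\<in>V. F x) = (\<Sum>k<N. F (g k))" for F :: "'a \<Rightarrow> real"
  proof -
    have "(\<Sum>x\<in>V. F x) = (\<Sum>x\<in>g ` {0..<N}. F x)" using g by (simp add: bij_betw_def)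
    also have "\<dots> = (\<Sum>k\<in>{0..<N}. F (g k))" by (rule sum.reindex[OF inj, unfolded comp_def])
    finally show ?thesis by (simp add: atLeast0LessThan)
  qed
  have orth: "(\<Sum>x\<in>V. u i x * u l x) = (if i = l then 1 else 0)" if "i < N" "l < N" for i l
  proof -
    have "(\<Sum>x\<in>V. u i x * u l x) = (\<Sum>k<N. P $$ (k, i) * P $$ (k, l))"
      unfolding reidx u_def by (rule sum.cong) (auto simp: hg)
    also have "\<dots> = (transpose_mat P * P) $$ (i, l)"
      using P that by (simp add: scalar_prod_def row_def col_def atLeast0LessThan)
    finally show ?thesis unfolding PtP using that by simp
  qed
  have compl: "(\<Sum>i<N. u i x * u i y) = (if x = y then 1 else 0)" if "x \<in> V" "y \<in> V" for x y
  proof -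
    have "(\<Sum>i<N. u i x * u i y) = (P * transpose_mat P) $$ (h x, h y)"
      using P that hV unfolding u_def by (simp add: scalar_prod_def row_def col_def atLeast0LessThan)
    also have "\<dots> = (if x = y then 1 else 0)" unfolding PPt using that hV
      by (auto simp: inj_on_eq_iff[OF bij_betw_imp_inj_on[OF hb]])
    finally show ?thesis .
  qed
  have eig: "(\<Sum>y\<in>V. L x y * u i y) = es ! i * u i x" if "i < N" "x \<in> V" for i x
  proof -
    have "(\<Sum>y\<in>V. L x y * u i y) = (\<Sum>k<N. A $$ (h x, k) * P $$ (k, i))"
      unfolding reidx u_def A_def using that hV by (intro sum.cong) (auto simp: hg gh)
    also have "\<dots> = (A * P) $$ (h x, i)"
      using P A that hV by (simp add: scalar_prod_def row_def col_def atLeast0LessThan)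
    also have "\<dots> = (P * diagm N es) $$ (h x, i)" unfolding AP ..
    also have "\<dots> = (\<Sum>k<N. P $$ (h x, k) * (if k = i then es ! k else 0))"
      using P that hV by (simp add: scalar_prod_def row_def col_def atLeast0LessThan diagm_def)
    also have "\<dots> = P $$ (h x, i) * es ! i" using that
      by (simp add: if_distrib[of "\<lambda>t. P $$ (h x, _) * t"] cong: if_cong)
    also have "\<dots> = es ! i * u i x" unfolding u_def by simp
    finally show ?thesis .
  qed
  have "sorted es" unfolding es by simp
  thus ?thesis
    by (intro exI[of _ u]) (use len orth compl eig in \<open>simp add: N_def\<close>)
qed



lemma card_symdiff_eq:
  assumes "finite X" "finite Y" "card X = card Y"
  shows "card (symdiff X Y) = 2 * card (X - Y)"
proof -
  have d: "(X - Y) \<inter> (Y - X) = {}" by auto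
  have "card (symdiff X Y) = card (X - Y) + card (Y - X)"
    unfolding symdiff_def using assms d by (simp add: card_Un_disjoint)
  moreover have "card (X - Y) = card X - card (X \<inter> Y)" using assms by (simp add: card_Diff_subset_Int)
  moreover have "card (Y - X) = card Y - card (Y \<inter> X)" using assms by (simp add: card_Diff_subset_Int)
  ultimately show ?thesis using assms by (simp add: Int_commute)
qed

lemma card_diff_sym:
  assumes "finite X" "finite Y" "card X = card Y"
  shows "card (Y - X) = card (X - Y)"
proof -
  have "card (X - Y) = card X - card (X \<inter> Y)" using assms by (simp add: card_Diff_subset_Int)
  moreover have "card (Y - X) = card Y - card (Y \<inter> X)" using assms by (simp add: card_Diff_subset_Int)
  ultimately show ?thesis using assms by (simp add: Int_commute)
qed

lemma johnson_vertices_finite: "finite (johnson_vertices n k)"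
  unfolding johnson_vertices_def by (rule finite_subset[of _ "Pow {1..n}"]) auto

lemma johnson_vertices_card: "card (johnson_vertices n k) = n choose k"
  unfolding johnson_vertices_def using n_subsets[of "{1..n}" k] by simp

lemma nb_count:
  fixes X :: "nat set" and n k j :: nat
  assumes nk: "n = 2 * k" and X: "X \<in> johnson_vertices n k"
  shows "card {Y \<in> johnson_vertices n k. card (symdiff X Y) = 2 * j \<and> P (X - Y) \<and> Q (Y - X)}
       = card {S. S \<subseteq> X \<and> card S = j \<and> P S} * card {T. T \<subseteq> {1..n} - X \<and> card T = j \<and> Q T}"
proof -
  let ?V = "johnson_vertices n k"
  let ?U = "{1..n}"
  have XU: "X \<subseteq> ?U" and cX: "card X = k" using X by (auto simp: johnson_vertices_def)
  have fX: "finite X" using XU finite_subset by blast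
  define F where "F Y = (X - Y, Y - X)" for Y :: "nat set"
  have "bij_betw F {Y \<in> ?V. card (symdiff X Y) = 2 * j \<and> P (X - Y) \<and> Q (Y - X)}
      ({S. S \<subseteq> X \<and> card S = j \<and> P S} \<times> {T. T \<subseteq> ?U - X \<and> card T = j \<and> Q T})"
  proof (rule bij_betw_byWitness[where f' = "\<lambda>(S,T). (X - S) \<union> T"])
    show "\<forall>Y\<in>{Y \<in> ?V. card (symdiff X Y) = 2 * j \<and> P (X - Y) \<and> Q (Y - X)}. (\<lambda>(S,T). (X - S) \<union> T) (F Y) = Y"
      unfolding F_def by auto
    show "\<forall>ST\<in>{S. S \<subseteq> X \<and> card S = j \<and> P S} \<times> {T. T \<subseteq> ?U - X \<and> card T = j \<and> Q T}. F ((\<lambda>(S,T). (X - S) \<union> T) ST) = ST"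
      unfolding F_def by auto
    show "F ` {Y \<in> ?V. card (symdiff X Y) = 2 * j \<and> P (X - Y) \<and> Q (Y - X)}
        \<subseteq> {S. S \<subseteq> X \<and> card S = j \<and> P S} \<times> {T. T \<subseteq> ?U - X \<and> card T = j \<and> Q T}"
    proof (rule image_subsetI)
      fix Y assume Y: "Y \<in> {Y \<in> ?V. card (symdiff X Y) = 2 * j \<and> P (X - Y) \<and> Q (Y - X)}"
      hence YU: "Y \<subseteq> ?U" and cY: "card Y = k" by (auto simp: johnson_vertices_def)
      have fY: "finite Y" using YU finite_subset by blast
      have "card (symdiff X Y) = 2 * card (X - Y)" by (rule card_symdiff_eq) (use fX fY cX cY in auto)
      hence c1: "card (X - Y) = j" using Y by simp
      have c2: "card (Y - X) = j" using card_diff_sym[of X Y] fX fY cX cY c1 by simp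
      show "F Y \<in> {S. S \<subseteq> X \<and> card S = j \<and> P S} \<times> {T. T \<subseteq> ?U - X \<and> card T = j \<and> Q T}"
        unfolding F_def using Y YU c1 c2 by auto
    qed
    show "(\<lambda>(S,T). (X - S) \<union> T) ` ({S. S \<subseteq> X \<and> card S = j \<and> P S} \<times> {T. T \<subseteq> ?U - X \<and> card T = j \<and> Q T})
        \<subseteq> {Y \<in> ?V. card (symdiff X Y) = 2 * j \<and> P (X - Y) \<and> Q (Y - X)}"
    proof (rule image_subsetI)
      fix ST assume ST: "ST \<in> {S. S \<subseteq> X \<and> card S = j \<and> P S} \<times> {T. T \<subseteq> ?U - X \<and> card T = j \<and> Q T}"
      obtain S T where ST': "ST = (S, T)" by (cases ST)
      have S: "S \<subseteq> X" "card S = j" "P S" and T: "T \<subseteq> ?U - X" "card T = j" "Q T" using ST ST' by auto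
      have fS: "finite S" using S fX finite_subset by blast
      have fT: "finite T" using T finite_subset by blast
      have XS: "X - (X - S \<union> T) = S" using S T by auto
      have TX: "(X - S \<union> T) - X = T" using S T by auto
      have cY: "card (X - S \<union> T) = k"
      proof -
        have "card (X - S \<union> T) = card (X - S) + card T"
          by (rule card_Un_disjoint) (use fX fT T in auto)
        also have "card (X - S) = k - j" using S cX fX by (simp add: card_Diff_subset fS)
        finally show ?thesis using S(2) T(2) card_mono[OF fX S(1)] cX by simp
      qed
      have YU: "X - S \<union> T \<subseteq> ?U" using XU T by auto
      have fY: "finite (X - S \<union> T)" using fX fT by simp
      have "card (symdiff X (X - S \<union> T)) = 2 * card (X - (X - S \<union> T))"
        by (rule card_symdiff_eq) (use fX fY cX cY in auto)
      thus "(\<lambda>(S,T). (X - S) \<union> T) ST \<in> {Y \<in> ?V. card (symdiff X Y) = 2 * j \<and> P (X - Y) \<and> Q (Y - X)}"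
        using XS TX S T YU cY ST' by (simp add: johnson_vertices_def)
    qed
  qed
  hence "card {Y \<in> ?V. card (symdiff X Y) = 2 * j \<and> P (X - Y) \<and> Q (Y - X)}
      = card ({S. S \<subseteq> X \<and> card S = j \<and> P S} \<times> {T. T \<subseteq> ?U - X \<and> card T = j \<and> Q T})"
    by (rule bij_betw_same_card)
  thus ?thesis by (simp add: card_cartesian_product)
qed

lemma card_subsets_with:
  assumes "finite A" "a \<in> A" "j \<ge> 1"
  shows "card {S. S \<subseteq> A \<and> card S = j \<and> a \<in> S} = (card A - 1) choose (j - 1)"
    and "card {S. S \<subseteq> A \<and> card S = j \<and> a \<notin> S} = (card A - 1) choose j"
proof -
  have wo: "{S. S \<subseteq> A \<and> card S = j \<and> a \<notin> S} = {S. S \<subseteq> A - {a} \<and> card S = j}" by auto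
  show c2: "card {S. S \<subseteq> A \<and> card S = j \<and> a \<notin> S} = (card A - 1) choose j"
    unfolding wo using assms by (simp add: n_subsets)
  have un: "{S. S \<subseteq> A \<and> card S = j} = {S. S \<subseteq> A \<and> card S = j \<and> a \<in> S} \<union> {S. S \<subseteq> A \<and> card S = j \<and> a \<notin> S}"
    by auto
  have fin: "finite {S. S \<subseteq> A \<and> card S = j \<and> a \<in> S}" "finite {S. S \<subseteq> A \<and> card S = j \<and> a \<notin> S}"
    using assms by auto
  have "(card A choose j) = card {S. S \<subseteq> A \<and> card S = j \<and> a \<in> S} + card {S. S \<subseteq> A \<and> card S = j \<and> a \<notin> S}"
    using n_subsets[OF assms(1), of j] un card_Un_disjoint[OF fin] by auto
  moreover have "(card A choose j) = ((card A - 1) choose (j - 1)) + ((card A - 1) choose j)"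
  proof -
    have "card A \<ge> 1" using assms by (metis One_nat_def Suc_leI card_gt_0_iff empty_iff)
    thus ?thesis using assms(3) by (metis Suc_diff_1 choose_reduce_nat less_eq_Suc_le not_one_le_zero zero_less_iff_neq_zero)
  qed
  ultimately show "card {S. S \<subseteq> A \<and> card S = j \<and> a \<in> S} = (card A - 1) choose (j - 1)"
    using c2 by simp
qed

lemma nb_card:
  assumes nk: "n = 2 * k" and X: "X \<in> johnson_vertices n k"
  shows "card {Y \<in> johnson_vertices n k. card (symdiff X Y) = 2 * j} = (k choose j)^2"
proof -
  have XU: "X \<subseteq> {1..n}" and cX: "card X = k" using X by (auto simp: johnson_vertices_def)
  have fX: "finite X" using XU finite_subset by blast
  have cUX: "card ({1..n} - X) = k" using XU cX nk by (simp add: card_Diff_subset fX)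
  have "card {Y \<in> johnson_vertices n k. card (symdiff X Y) = 2 * j \<and> (\<lambda>_. True) (X - Y) \<and> (\<lambda>_. True) (Y - X)}
       = card {S. S \<subseteq> X \<and> card S = j \<and> (\<lambda>_. True) S} * card {T. T \<subseteq> {1..n} - X \<and> card T = j \<and> (\<lambda>_. True) T}"
    by (rule nb_count[OF nk X])
  thus ?thesis using n_subsets[OF fX, of j] n_subsets[of "{1..n} - X" j] cX cUX
    by (simp add: power2_eq_square)
qed

lemma moved_card:
  assumes nk: "n = 2 * k" and X: "X \<in> johnson_vertices n k" and j1: "1 \<le> j"
    and a: "a \<in> X" and b: "b \<in> {1..n} - X"
  shows "card {Y \<in> johnson_vertices n k. card (symdiff X Y) = 2 * j \<and> (a \<in> Y) \<noteq> (b \<in> Y)}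
     = ((k - 1) choose (j - 1))^2 + ((k - 1) choose j)^2"
proof -
  let ?V = "johnson_vertices n k"
  have XU: "X \<subseteq> {1..n}" and cX: "card X = k" using X by (auto simp: johnson_vertices_def)
  have fX: "finite X" using XU finite_subset by blast
  have cUX: "card ({1..n} - X) = k" using XU cX nk by (simp add: card_Diff_subset fX)
  have eq: "{Y \<in> ?V. card (symdiff X Y) = 2 * j \<and> (a \<in> Y) \<noteq> (b \<in> Y)}
    = {Y \<in> ?V. card (symdiff X Y) = 2 * j \<and> (\<lambda>S. a \<in> S) (X - Y) \<and> (\<lambda>T. b \<in> T) (Y - X)}
    \<union> {Y \<in> ?V. card (symdiff X Y) = 2 * j \<and> (\<lambda>S. a \<notin> S) (X - Y) \<and> (\<lambda>T. b \<notin> T) (Y - X)}"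
    using a b by auto
  have fin: "finite ?V" by (rule johnson_vertices_finite)
  have c1: "card {Y \<in> ?V. card (symdiff X Y) = 2 * j \<and> (\<lambda>S. a \<in> S) (X - Y) \<and> (\<lambda>T. b \<in> T) (Y - X)}
     = ((k - 1) choose (j - 1))^2"
    unfolding nb_count[OF nk X, of j "\<lambda>S. a \<in> S" "\<lambda>T. b \<in> T"] using card_subsets_with(1)[OF fX a j1] card_subsets_with(1)[of "{1..n} - X" b j] b j1 cX cUX
    by (simp add: power2_eq_square)
  have c2: "card {Y \<in> ?V. card (symdiff X Y) = 2 * j \<and> (\<lambda>S. a \<notin> S) (X - Y) \<and> (\<lambda>T. b \<notin> T) (Y - X)}
     = ((k - 1) choose j)^2"
    unfolding nb_count[OF nk X, of j "\<lambda>S. a \<notin> S" "\<lambda>T. b \<notin> T"] using card_subsets_with(2)[OF fX a j1] card_subsets_with(2)[of "{1..n} - X" b j] b j1 cX cUX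
    by (simp add: power2_eq_square)
  let ?S1 = "{Y \<in> ?V. card (symdiff X Y) = 2 * j \<and> (\<lambda>S. a \<in> S) (X - Y) \<and> (\<lambda>T. b \<in> T) (Y - X)}"
  let ?S2 = "{Y \<in> ?V. card (symdiff X Y) = 2 * j \<and> (\<lambda>S. a \<notin> S) (X - Y) \<and> (\<lambda>T. b \<notin> T) (Y - X)}"
  have f1: "finite ?S1" using fin by (rule finite_subset[rotated]) blast
  have f2: "finite ?S2" using fin by (rule finite_subset[rotated]) blast
  have disj: "?S1 \<inter> ?S2 = {}" by blast
  show ?thesis unfolding eq card_Un_disjoint[OF f1 f2 disj] c1 c2 ..
qed

lemma moved_bound:
  fixes j k :: nat
  assumes j1: "1 \<le> j" and jk: "8 * j \<le> 7 * k"
  shows "real (((k - 1) choose (j - 1))^2 + ((k - 1) choose j)^2)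
     \<le> (1 - real j / (4 * real k)) * real ((k choose j)^2)"
proof -
  define B where "B = real (k choose j)"
  define x where "x = real ((k - 1) choose (j - 1))"
  define y where "y = real ((k - 1) choose j)"
  define K where "K = real k"
  define J where "J = real j"
  have k0: "k > 0" using j1 jk by auto
  have K0: "K > 0" unfolding K_def using k0 by simp
  have j0: "0 < j" using j1 by simp
  have hx: "K * x = J * B"
  proof -
    have "real (j * (k choose j)) = real (k * ((k - 1) choose (j - 1)))"
      by (simp only: times_binomial_minus1_eq[OF j0])
    thus ?thesis unfolding K_def x_def J_def B_def of_nat_mult by simp
  qed
  have hy: "K * y = (K - J) * B"
  proof -
    have "real ((k - j) * (k choose j)) = real (k * ((k - 1) choose j))"
      by (simp only: binomial_absorb_comp)
    moreover have "real (k - j) = K - J" unfolding K_def J_def using jk by auto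
    ultimately show ?thesis unfolding K_def y_def B_def of_nat_mult by simp
  qed
  have e1: "K^2 * (x^2 + y^2) = (K * x)^2 + (K * y)^2"
    by (simp only: power_mult_distrib distrib_left)
  have e2: "(K * x)^2 + (K * y)^2 = (J^2 + (K - J)^2) * B^2"
    unfolding hx hy by (simp only: power_mult_distrib distrib_right)
  have ineq: "J^2 + (K - J)^2 \<le> K^2 - J * K / 4"
  proof -
    have a1: "(K - J)^2 = K * K - 2 * (J * K) + J * J" by (simp add: power2_eq_square algebra_simps)
    have a2: "J^2 = J * J" "K^2 = K * K" by (simp_all add: power2_eq_square)
    have "J * (8 * J - 7 * K) \<le> 0"
      by (rule mult_nonneg_nonpos) (use jk in \<open>auto simp: J_def K_def\<close>)
    hence "8 * (J * J) - 7 * (J * K) \<le> 0" by (simp add: right_diff_distrib mult.left_commute)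
    thus ?thesis unfolding a1 a2 by linarith
  qed
  have e3: "(K^2 - J * K / 4) * B^2 = K^2 * ((1 - J / (4 * K)) * B^2)"
  proof -
    have "K^2 * (1 - J / (4 * K)) = K^2 - J * K / 4"
      using K0 by (simp add: power2_eq_square right_diff_distrib)
    thus ?thesis by (metis mult.assoc)
  qed
  have "K^2 * (x^2 + y^2) \<le> K^2 * ((1 - J / (4 * K)) * B^2)"
    unfolding e1 e2 e3[symmetric] by (rule mult_right_mono[OF ineq]) simp
  hence "x^2 + y^2 \<le> (1 - J / (4 * K)) * B^2"
    using K0 by (simp add: mult_le_cancel_left_pos)
  thus ?thesis unfolding x_def y_def B_def J_def K_def by simp
qed

lemma tr_image_invol: "Transposition.transpose a b ` (Transposition.transpose a b ` Z) = Z"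
  by (simp add: image_comp)

lemma tr_image_card: "finite Z \<Longrightarrow> card (Transposition.transpose a b ` Z) = card Z"
  by (simp add: card_image)

lemma tr_image_symdiff:
  "symdiff (Transposition.transpose a b ` Z) (Transposition.transpose a b ` W)
   = Transposition.transpose a b ` (symdiff Z W)"
  unfolding symdiff_def by (simp add: image_Un image_set_diff)

lemma tr_image_fixed: "(a \<in> Z) = (b \<in> Z) \<Longrightarrow> Transposition.transpose a b ` Z = Z"
  by (auto simp: in_transpose_image_iff transpose_def split: if_splits)

lemma tr_image_moved:
  assumes "(a \<in> Z) \<noteq> (b \<in> Z)"
  shows "card (Z - Transposition.transpose a b ` Z) = 1"
proof (cases "a \<in> Z")
  case True
  hence "Z - Transposition.transpose a b ` Z = {a}" using assms
    by (auto simp: in_transpose_image_iff transpose_def split: if_splits)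
  thus ?thesis by simp
next
  case False
  hence "Z - Transposition.transpose a b ` Z = {b}" using assms
    by (auto simp: in_transpose_image_iff transpose_def split: if_splits)
  thus ?thesis by simp
qed

lemma tr_image_swap:
  assumes "X - Y = {a}" "Y - X = {b}"
  shows "Transposition.transpose a b ` X = Y"
proof -
  have ab: "a \<in> X" "a \<notin> Y" "b \<in> Y" "b \<notin> X" using assms by auto
  show ?thesis
  proof (rule Set.set_eqI)
    fix x
    show "x \<in> Transposition.transpose a b ` X \<longleftrightarrow> x \<in> Y"
      unfolding in_transpose_image_iff using assms ab
      by (cases "x = a"; cases "x = b") (auto simp: transpose_def)
  qed
qed

lemma tr_image_vertices:
  assumes "Z \<in> johnson_vertices n k" "a \<in> {1..n}" "b \<in> {1..n}"
  shows "Transposition.transpose a b ` Z \<in> johnson_vertices n k"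
proof -
  have ZU: "Z \<subseteq> {1..n}" and cZ: "card Z = k" using assms by (auto simp: johnson_vertices_def)
  have "finite Z" using ZU finite_subset by blast
  moreover have "Transposition.transpose a b ` Z \<subseteq> {1..n}"
    using ZU assms(2,3) by (auto simp: transpose_def)
  ultimately show ?thesis using cZ by (simp add: johnson_vertices_def tr_image_card)
qed

lemma eig_const:
  fixes n k j :: nat and u :: "nat set \<Rightarrow> real" and e :: real
  assumes nk: "n = 2 * k" and j1: "1 \<le> j" and jk: "8 * j \<le> 7 * k"
    and eig: "\<And>X. X \<in> johnson_vertices n k \<Longrightarrow>
       (\<Sum>Y\<in>johnson_vertices n k. johnson_norm_laplacian n j X Y * u Y) = e * u X"
    and e: "e < real j / (4 * real k)"
    and X: "X \<in> johnson_vertices n k" and Y: "Y \<in> johnson_vertices n k"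
  shows "u X = u Y"
proof -
  let ?V = "johnson_vertices n k"
  define nb where "nb X = {Y \<in> ?V. card (symdiff X Y) = 2 * j}" for X
  have finV: "finite ?V" by (rule johnson_vertices_finite)
  have ndiv: "n div 2 = k" using nk by simp
  define d where "d = real ((k choose j)^2)"
  have jk': "j \<le> k" using jk by linarith
  have d0: "d > 0" unfolding d_def using jk' by simp
  define c where "c = real j / (4 * real k)"
  have nbsum: "(\<Sum>Y\<in>nb X. u Y) = d * (1 - e) * u X" if X: "X \<in> ?V" for X
  proof -
    have "e * u X = (\<Sum>Y\<in>?V. johnson_norm_laplacian n j X Y * u Y)" using eig[OF X] by simp
    also have "\<dots> = (\<Sum>Y\<in>?V. (if X = Y then u Y else 0)) - (\<Sum>Y\<in>?V. (if card (symdiff X Y) = 2 * j then u Y else 0)) / d"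
    proof -
      have "(\<Sum>Y\<in>?V. johnson_norm_laplacian n j X Y * u Y)
         = (\<Sum>Y\<in>?V. (if X = Y then u Y else 0) - (if card (symdiff X Y) = 2 * j then u Y else 0) / d)"
        unfolding johnson_norm_laplacian_def johnson_adjmat_def johnson_adj_def ndiv d_def[symmetric]
        by (intro sum.cong refl) (auto simp: field_simps)
      thus ?thesis by (simp add: sum_subtractf sum_divide_distrib)
    qed
    also have "(\<Sum>Y\<in>?V. (if X = Y then u Y else 0)) = u X" using X finV by simp
    also have "(\<Sum>Y\<in>?V. (if card (symdiff X Y) = 2 * j then u Y else 0)) = (\<Sum>Y\<in>nb X. u Y)"
      unfolding nb_def using finV by (simp add: sum.inter_filter)
    finally show ?thesis using d0 by (simp add: field_simps)
  qed
  have local: "u X = u Y" if X: "X \<in> ?V" and Y: "Y \<in> ?V" and XY: "card (X - Y) = 1" for X Y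
  proof (rule ccontr)
    assume neq: "u X \<noteq> u Y"
    define D where "D = {p \<in> ?V \<times> ?V. card (fst p - snd p) = 1}"
    have finD: "finite D" unfolding D_def using finV by auto
    define g where "g p = \<bar>u (fst p) - u (snd p)\<bar>" for p
    define M where "M = Max (g ` D)"
    have XYD: "(X, Y) \<in> D" unfolding D_def using X Y XY by auto
    have "g (X, Y) \<le> M" unfolding M_def using finD XYD by auto
    hence M0: "M > 0" using neq unfolding g_def by auto
    have Mge: "g p \<le> M" if "p \<in> D" for p unfolding M_def using finD that by auto
    have "M \<in> g ` D" unfolding M_def using finD XYD by (intro Max_in) auto
    then obtain p where pD: "p \<in> D" and gp: "g p = M" by auto
    define X0 where "X0 = fst p"
    define Y0 where "Y0 = snd p"
    have X0: "X0 \<in> ?V" and Y0: "Y0 \<in> ?V" and c01: "card (X0 - Y0) = 1"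
      using pD unfolding D_def X0_def Y0_def by auto
    have X0U: "X0 \<subseteq> {1..n}" and cX0: "card X0 = k" using X0 by (auto simp: johnson_vertices_def)
    have Y0U: "Y0 \<subseteq> {1..n}" and cY0: "card Y0 = k" using Y0 by (auto simp: johnson_vertices_def)
    have fX0: "finite X0" using X0U finite_subset by blast
    have fY0: "finite Y0" using Y0U finite_subset by blast
    have c10: "card (Y0 - X0) = 1" using card_diff_sym[OF fX0 fY0] cX0 cY0 c01 by simp
    obtain a where a: "X0 - Y0 = {a}" using c01 by (meson card_1_singletonE)
    obtain b where b: "Y0 - X0 = {b}" using c10 by (meson card_1_singletonE)
    have aX: "a \<in> X0" and aU: "a \<in> {1..n}" using a X0U by auto
    have bX: "b \<in> {1..n} - X0" and bU: "b \<in> {1..n}" using b Y0U by auto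
    define \<tau> where "\<tau> = Transposition.transpose a b"
    have tX0: "\<tau> ` X0 = Y0" unfolding \<tau>_def by (rule tr_image_swap[OF a b])
    have tY0: "\<tau> ` Y0 = X0" using tX0 tr_image_invol[of a b X0] unfolding \<tau>_def by simp
    have cardsym: "card (symdiff (\<tau> ` Z) (\<tau> ` W)) = card (symdiff Z W)" for Z W
      unfolding \<tau>_def tr_image_symdiff
      by (rule card_image) simp
    have bij: "bij_betw ((`) \<tau>) (nb X0) (nb Y0)"
    proof (rule bij_betw_byWitness[where f' = "(`) \<tau>"])
      show "\<forall>Z\<in>nb X0. \<tau> ` (\<tau> ` Z) = Z" unfolding \<tau>_def by (simp add: tr_image_invol)
      show "\<forall>Z\<in>nb Y0. \<tau> ` (\<tau> ` Z) = Z" unfolding \<tau>_def by (simp add: tr_image_invol)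
      show "(`) \<tau> ` nb X0 \<subseteq> nb Y0"
      proof
        fix W assume "W \<in> (`) \<tau> ` nb X0"
        then obtain Z where Z: "Z \<in> nb X0" and W: "W = \<tau> ` Z" by auto
        have "W \<in> ?V" unfolding W \<tau>_def using Z aU bU by (intro tr_image_vertices) (auto simp: nb_def)
        moreover have "card (symdiff Y0 W) = 2 * j"
          using Z cardsym[of X0 Z] unfolding W tX0[symmetric] nb_def by auto
        ultimately show "W \<in> nb Y0" unfolding nb_def by auto
      qed
      show "(`) \<tau> ` nb Y0 \<subseteq> nb X0"
      proof
        fix W assume "W \<in> (`) \<tau> ` nb Y0"
        then obtain Z where Z: "Z \<in> nb Y0" and W: "W = \<tau> ` Z" by auto
        have "W \<in> ?V" unfolding W \<tau>_def using Z aU bU by (intro tr_image_vertices) (auto simp: nb_def)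
        moreover have "card (symdiff X0 W) = 2 * j"
          using Z cardsym[of Y0 Z] unfolding W tY0[symmetric] nb_def by auto
        ultimately show "W \<in> nb X0" unfolding nb_def by auto
      qed
    qed
    have sumeq: "(\<Sum>W\<in>nb Y0. u W) = (\<Sum>Z\<in>nb X0. u (\<tau> ` Z))"
      using sum.reindex_bij_betw[OF bij, of u] by simp
    have key: "d * (1 - e) * (u X0 - u Y0) = (\<Sum>Z\<in>nb X0. u Z - u (\<tau> ` Z))"
      using nbsum[OF X0] nbsum[OF Y0] sumeq by (simp add: sum_subtractf right_diff_distrib)
    have finnb: "finite (nb X0)" unfolding nb_def using finV by auto
    have "\<bar>\<Sum>Z\<in>nb X0. u Z - u (\<tau> ` Z)\<bar> \<le> (\<Sum>Z\<in>nb X0. \<bar>u Z - u (\<tau> ` Z)\<bar>)" by (rule sum_abs)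
    also have "\<dots> \<le> (\<Sum>Z\<in>nb X0. if (a \<in> Z) \<noteq> (b \<in> Z) then M else 0)"
    proof (rule sum_mono)
      fix Z assume Z: "Z \<in> nb X0"
      show "\<bar>u Z - u (\<tau> ` Z)\<bar> \<le> (if (a \<in> Z) \<noteq> (b \<in> Z) then M else 0)"
      proof (cases "(a \<in> Z) \<noteq> (b \<in> Z)")
        case True
        have "(Z, \<tau> ` Z) \<in> D" unfolding D_def \<tau>_def using Z aU bU True
          by (auto simp: nb_def tr_image_moved intro!: tr_image_vertices)
        from Mge[OF this] show ?thesis using True unfolding g_def by simp
      next
        case False
        thus ?thesis unfolding \<tau>_def by (simp add: tr_image_fixed)
      qed
    qed
    also have "\<dots> = M * real (card {Z \<in> nb X0. (a \<in> Z) \<noteq> (b \<in> Z)})"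
      using finnb by (simp add: sum.If_cases Int_def conj_commute)
    also have "card {Z \<in> nb X0. (a \<in> Z) \<noteq> (b \<in> Z)} = ((k - 1) choose (j - 1))^2 + ((k - 1) choose j)^2"
      unfolding nb_def using moved_card[OF nk X0 j1 aX bX] by (simp add: conj_assoc)
    also have "M * real (((k - 1) choose (j - 1))^2 + ((k - 1) choose j)^2) \<le> M * ((1 - c) * d)"
      using moved_bound[OF j1 jk] M0 unfolding c_def d_def by (intro mult_left_mono) auto
    finally have up: "\<bar>d * (1 - e) * (u X0 - u Y0)\<bar> \<le> M * ((1 - c) * d)" unfolding key .
    have "\<bar>u X0 - u Y0\<bar> = M" using gp unfolding g_def X0_def Y0_def .
    hence "\<bar>d * (1 - e) * (u X0 - u Y0)\<bar> = d * \<bar>1 - e\<bar> * M" using d0 by (simp add: abs_mult)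
    also have "\<dots> \<ge> d * (1 - e) * M" using d0 M0 by (intro mult_right_mono mult_left_mono) auto
    finally have "d * (1 - e) * M \<le> M * ((1 - c) * d)" using up by linarith
    hence "d * M * (c - e) \<le> 0" by (simp add: algebra_simps)
    moreover have "d * M > 0" using d0 M0 by simp
    ultimately have "c - e \<le> 0" using mult_pos_pos[of "d * M" "c - e"] by linarith
    thus False using e unfolding c_def by simp
  qed
  have "\<forall>X Y. X \<in> ?V \<longrightarrow> Y \<in> ?V \<longrightarrow> card (X - Y) = m \<longrightarrow> u X = u Y" for m
  proof (induction m)
    case 0
    show ?case
    proof (intro allI impI)
      fix X Y assume X: "X \<in> ?V" and Y: "Y \<in> ?V" and c: "card (X - Y) = 0"
      have XU: "X \<subseteq> {1..n}" and YU: "Y \<subseteq> {1..n}" and "card X = card Y"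
        using X Y by (auto simp: johnson_vertices_def)
      moreover have fX: "finite X" "finite Y" using XU YU finite_subset by auto
      ultimately have "X \<subseteq> Y" using c by auto
      hence "X = Y" using card_subset_eq[of Y X] fX \<open>card X = card Y\<close> by auto
      thus "u X = u Y" by simp
    qed
  next
    case (Suc m)
    show ?case
    proof (intro allI impI)
      fix X Y assume X: "X \<in> ?V" and Y: "Y \<in> ?V" and c: "card (X - Y) = Suc m"
      have XU: "X \<subseteq> {1..n}" and YU: "Y \<subseteq> {1..n}" and cXY: "card X = card Y"
        using X Y by (auto simp: johnson_vertices_def)
      have fX: "finite X" "finite Y" using XU YU finite_subset by auto
      have c2: "card (Y - X) = Suc m" using card_diff_sym[OF fX cXY] c by simp
      obtain a where a: "a \<in> X - Y" using c by (metis card.empty ex_in_conv nat.simps(3))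
      obtain b where b: "b \<in> Y - X" using c2 by (metis card.empty ex_in_conv nat.simps(3))
      define X' where "X' = Transposition.transpose a b ` X"
      have aU: "a \<in> {1..n}" and bU: "b \<in> {1..n}" using a b XU YU by auto
      have X': "X' \<in> ?V" unfolding X'_def by (rule tr_image_vertices[OF X aU bU])
      have "card (X - X') = 1" unfolding X'_def by (rule tr_image_moved) (use a b in auto)
      hence e1: "u X = u X'" by (rule local[OF X X'])
      have "X' - Y = (X - Y) - {a}" unfolding X'_def
      proof (rule Set.set_eqI)
        fix x
        show "x \<in> Transposition.transpose a b ` X - Y \<longleftrightarrow> x \<in> X - Y - {a}"
          unfolding in_transpose_image_iff using a b
          by (cases "x = a"; cases "x = b") (auto simp: transpose_def)
      qed
      hence "card (X' - Y) = m" using c a fX by simp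
      hence "u X' = u Y" using Suc.IH X' Y by blast
      thus "u X = u Y" using e1 by simp
    qed
  qed
  thus ?thesis using X Y by blast
qed



lemma rayleigh_second:
  fixes V :: "'a set" and L :: "'a \<Rightarrow> 'a \<Rightarrow> real" and u :: "nat \<Rightarrow> 'a \<Rightarrow> real"
    and es :: "real list" and f :: "'a \<Rightarrow> real"
  assumes fin: "finite V" and N2: "card V \<ge> 2"
    and sym: "\<And>x y. x \<in> V \<Longrightarrow> y \<in> V \<Longrightarrow> L x y = L y x"
    and rows: "\<And>x. x \<in> V \<Longrightarrow> (\<Sum>y\<in>V. L x y) = 0"
    and len: "length es = card V" and sorted: "sorted es"
    and compl: "\<forall>x\<in>V. \<forall>y\<in>V. (\<Sum>i<card V. u i x * u i y) = (if x = y then 1 else 0)"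
    and eig: "\<forall>i<card V. \<forall>x\<in>V. (\<Sum>y\<in>V. L x y * u i y) = es ! i * u i x"
    and pos: "es ! 1 > 0"
    and f0: "(\<Sum>x\<in>V. f x) = 0"
  shows "(\<Sum>x\<in>V. f x * (\<Sum>y\<in>V. L x y * f y)) \<ge> es ! 1 * (\<Sum>x\<in>V. (f x)^2)"
proof -
  define N where "N = card V"
  define c where "c F i = (\<Sum>x\<in>V. F x * u i x)" for F :: "'a \<Rightarrow> real" and i
  have pars: "(\<Sum>x\<in>V. F x * G x) = (\<Sum>i<N. c F i * c G i)" for F G
  proof -
    have "(\<Sum>i<N. c F i * c G i) = (\<Sum>i<N. \<Sum>x\<in>V. \<Sum>y\<in>V. F x * G y * (u i x * u i y))"
      unfolding c_def by (simp add: sum_product mult_ac)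
    also have "\<dots> = (\<Sum>x\<in>V. \<Sum>y\<in>V. F x * G y * (\<Sum>i<N. u i x * u i y))"
      by (simp add: sum.swap[of _ "{..<N}"] sum_distrib_left)
    also have "\<dots> = (\<Sum>x\<in>V. \<Sum>y\<in>V. F x * G y * (if x = y then 1 else 0))"
      using compl unfolding N_def by (intro sum.cong refl) auto
    also have "\<dots> = (\<Sum>x\<in>V. F x * G x)"
      using fin by (simp add: if_distrib cong: if_cong)
    finally show ?thesis by simp
  qed
  have Lc: "c (\<lambda>x. \<Sum>y\<in>V. L x y * F y) i = es ! i * c F i" if i: "i < N" for F i
  proof -
    have "c (\<lambda>x. \<Sum>y\<in>V. L x y * F y) i = (\<Sum>x\<in>V. \<Sum>y\<in>V. L x y * F y * u i x)"
      unfolding c_def by (simp add: sum_distrib_right)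
    also have "\<dots> = (\<Sum>y\<in>V. \<Sum>x\<in>V. L x y * F y * u i x)" by (rule sum.swap)
    also have "\<dots> = (\<Sum>y\<in>V. F y * (\<Sum>x\<in>V. L y x * u i x))"
      by (intro sum.cong refl) (auto simp: sum_distrib_left sym mult_ac)
    also have "\<dots> = (\<Sum>y\<in>V. F y * (es ! i * u i y))"
      using eig i unfolding N_def by (intro sum.cong refl) auto
    also have "\<dots> = es ! i * c F i" unfolding c_def by (simp add: sum_distrib_left mult_ac)
    finally show ?thesis .
  qed
  have es1: "es ! i \<ge> es ! 1" if "1 \<le> i" "i < N" for i
    using sorted_nth_mono[OF sorted that(1)] that len unfolding N_def by auto
  have one0: "c (\<lambda>_. 1) i = 0" if "1 \<le> i" "i < N" for i
  proof -
    have "c (\<lambda>x. \<Sum>y\<in>V. L x y * 1) i = 0" unfolding c_def using rows by simp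
    hence "es ! i * c (\<lambda>_. 1) i = 0" using Lc[OF that(2), of "\<lambda>_. 1"] by simp
    moreover have "es ! i > 0" using es1[OF that] pos by simp
    ultimately show ?thesis by simp
  qed
  have N0: "0 < N" using N2 unfolding N_def by simp
  have split: "(\<Sum>i<N. F i) = F 0 + (\<Sum>i\<in>{1..<N}. F i)" for F :: "nat \<Rightarrow> real"
  proof -
    have "{..<N} = insert 0 {1..<N}" using N0 by auto
    thus ?thesis by simp
  qed
  have "real N = (\<Sum>x\<in>V. 1 * 1)" unfolding N_def by simp
  also have "\<dots> = (\<Sum>i<N. c (\<lambda>_. 1) i * c (\<lambda>_. 1) i)" by (rule pars)
  also have "\<dots> = c (\<lambda>_. 1) 0 * c (\<lambda>_. 1) 0" unfolding split using one0 by simp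
  finally have "c (\<lambda>_. 1) 0 \<noteq> 0" using N0 by auto
  moreover have "0 = c f 0 * c (\<lambda>_. 1) 0"
  proof -
    have "0 = (\<Sum>x\<in>V. f x * 1)" using f0 by simp
    also have "\<dots> = (\<Sum>i<N. c f i * c (\<lambda>_. 1) i)" by (rule pars)
    also have "\<dots> = c f 0 * c (\<lambda>_. 1) 0" unfolding split using one0 by simp
    finally show ?thesis .
  qed
  ultimately have cf0: "c f 0 = 0" by simp
  have "(\<Sum>x\<in>V. f x * (\<Sum>y\<in>V. L x y * f y)) = (\<Sum>i<N. c f i * c (\<lambda>x. \<Sum>y\<in>V. L x y * f y) i)"
    by (rule pars)
  also have "\<dots> = (\<Sum>i<N. es ! i * (c f i)^2)"
    by (intro sum.cong refl) (auto simp: Lc power2_eq_square)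
  also have "\<dots> \<ge> (\<Sum>i<N. es ! 1 * (c f i)^2)"
  proof (rule sum_mono)
    fix i assume "i \<in> {..<N}"
    thus "es ! 1 * (c f i)^2 \<le> es ! i * (c f i)^2"
      using es1[of i] cf0 by (cases "i = 0") (auto intro: mult_right_mono)
  qed
  also have "(\<Sum>i<N. es ! 1 * (c f i)^2) = es ! 1 * (\<Sum>x\<in>V. (f x)^2)"
    using pars[of f f] by (simp add: sum_distrib_left power2_eq_square)
  finally show ?thesis .
qed



lemma card_pairs_sum:
  fixes V :: "'a set" and P :: "'a \<Rightarrow> 'a \<Rightarrow> bool"
  assumes "finite V"
  shows "real (card {(A, B) \<in> V \<times> V. P A B}) = (\<Sum>A\<in>V. \<Sum>B\<in>V. if P A B then 1 else 0)"
proof -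
  have eq: "{(A, B) \<in> V \<times> V. P A B} = {p \<in> V \<times> V. P (fst p) (snd p)}" by auto
  have "real (card {(A, B) \<in> V \<times> V. P A B}) = (\<Sum>p\<in>{p \<in> V \<times> V. P (fst p) (snd p)}. 1)"
    unfolding eq by simp
  also have "\<dots> = (\<Sum>p\<in>V \<times> V. if P (fst p) (snd p) then 1 else 0)"
    using assms by (subst sum.inter_filter) auto
  also have "\<dots> = (\<Sum>A\<in>V. \<Sum>B\<in>V. if P A B then 1 else 0)"
    by (simp add: sum.cartesian_product case_prod_beta)
  finally show ?thesis .
qed

lemma symdiff_comm: "symdiff A B = symdiff B A"
  unfolding symdiff_def by auto

lemma claim1:
  assumes AV: "\<A> \<subseteq> johnson_vertices n k"
  shows "card {(A, B) \<in> johnson_vertices n k \<times> johnson_vertices n k. card (symdiff A B) = 2 * j \<and> A \<in> \<A> \<and> B \<notin> \<A>}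
    = johnson_e n k j \<A> (johnson_vertices n k - \<A>)"
proof -
  let ?V = "johnson_vertices n k"
  let ?S = "{(A, B) \<in> ?V \<times> ?V. card (symdiff A B) = 2 * j \<and> A \<in> \<A> \<and> B \<notin> \<A>}"
  let ?T = "{e \<in> johnson_edges n k j. \<exists>A\<in>\<A>. \<exists>B\<in>?V - \<A>. e = {A, B}}"
  have "bij_betw (\<lambda>(A,B). {A, B}) ?S ?T"
  proof (rule bij_betw_imageI)
    show "inj_on (\<lambda>(A,B). {A, B}) ?S"
      by (rule inj_onI) (auto simp: doubleton_eq_iff)
    show "(\<lambda>(A,B). {A, B}) ` ?S = ?T"
    proof
      show "(\<lambda>(A,B). {A, B}) ` ?S \<subseteq> ?T"
        by (auto simp: johnson_edges_def johnson_adj_def)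
      show "?T \<subseteq> (\<lambda>(A,B). {A, B}) ` ?S"
      proof
        fix e assume "e \<in> ?T"
        then obtain A B A0 B0 where A: "A \<in> \<A>" and B: "B \<in> ?V - \<A>" and e: "e = {A, B}"
          and e0: "e = {A0, B0}" and adj: "card (symdiff A0 B0) = 2 * j"
          by (auto simp: johnson_edges_def johnson_adj_def)
        have "card (symdiff A B) = 2 * j"
          using e e0 adj by (auto simp: doubleton_eq_iff symdiff_comm)
        hence "(A, B) \<in> ?S" using A B AV by auto
        thus "e \<in> (\<lambda>(A,B). {A, B}) ` ?S" using e by force
      qed
    qed
  qed
  thus ?thesis unfolding johnson_e_def by (rule bij_betw_same_card)
qed

lemma sum_if_card: "finite V \<Longrightarrow> (\<Sum>x\<in>V. if P x then 1 else 0 :: real) = real (card {x \<in> V. P x})"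
  using sum.inter_filter[of V "\<lambda>_. 1::real" P] by simp

lemma indicator_sum:
  assumes "finite V" "\<A> \<subseteq> V"
  shows "(\<Sum>X\<in>V. (if X \<in> \<A> then 1 else 0 :: real)) = real (card \<A>)"
proof -
  have "(\<Sum>X\<in>V. (if X \<in> \<A> then 1 else 0 :: real)) = (\<Sum>X\<in>{X \<in> V. X \<in> \<A>}. 1)"
    using assms by (simp add: sum_if_card)
  also have "{X \<in> V. X \<in> \<A>} = \<A>" using assms by auto
  finally show ?thesis by simp
qed

lemma quad_form:
  fixes n k j :: nat and \<A> :: "nat set set"
  assumes nk: "n = 2 * k" and AV: "\<A> \<subseteq> johnson_vertices n k" and jk: "j \<le> k"
  defines "V \<equiv> johnson_vertices n k"
  defines "d \<equiv> real ((k choose j)^2)"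
  defines "\<mu> \<equiv> real (card \<A>) / real (card V)"
  defines "f \<equiv> (\<lambda>X. (if X \<in> \<A> then 1 else 0) - \<mu>)"
  shows "(\<Sum>X\<in>V. f X * (\<Sum>Y\<in>V. johnson_norm_laplacian n j X Y * f Y))
     = real (card {(A, B) \<in> V \<times> V. card (symdiff A B) = 2 * j \<and> A \<in> \<A> \<and> B \<notin> \<A>}) / d"
proof -
  have finV: "finite V" unfolding V_def by (rule johnson_vertices_finite)
  have ndiv: "n div 2 = k" using nk by simp
  have d0: "d > 0" unfolding d_def using jk by simp
  define a where "a X Y = (if card (symdiff X Y) = 2 * j then 1 else 0 :: real)" for X Y :: "nat set"
  define i where "i X = (if X \<in> \<A> then 1 else 0 :: real)" for X
  have asym: "a X Y = a Y X" for X Y unfolding a_def by (simp add: symdiff_comm)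
  have deg: "(\<Sum>Y\<in>V. a X Y) = d" if X: "X \<in> V" for X
  proof -
    have "(\<Sum>Y\<in>V. a X Y) = (\<Sum>Y\<in>{Y \<in> V. card (symdiff X Y) = 2 * j}. 1)"
      unfolding a_def using finV by (simp add: sum_if_card)
    also have "\<dots> = d" using nb_card[OF nk X[unfolded V_def], of j] unfolding d_def V_def by simp
    finally show ?thesis .
  qed
  have Lrow: "(\<Sum>Y\<in>V. johnson_norm_laplacian n j X Y * f Y) = f X - (\<Sum>Y\<in>V. a X Y * f Y) / d"
    if X: "X \<in> V" for X
  proof -
    have "(\<Sum>Y\<in>V. johnson_norm_laplacian n j X Y * f Y) = (\<Sum>Y\<in>V. (if X = Y then f Y else 0) - a X Y * f Y / d)"
      unfolding johnson_norm_laplacian_def johnson_adjmat_def johnson_adj_def ndiv d_def[symmetric] a_def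
      by (intro sum.cong refl) (auto simp: field_simps)
    also have "\<dots> = f X - (\<Sum>Y\<in>V. a X Y * f Y) / d"
      using X finV by (simp add: sum_subtractf sum_divide_distrib)
    finally show ?thesis .
  qed
  have "(\<Sum>X\<in>V. f X * (\<Sum>Y\<in>V. johnson_norm_laplacian n j X Y * f Y))
      = (\<Sum>X\<in>V. f X * f X - (\<Sum>Y\<in>V. a X Y * f X * f Y) / d)"
  proof (rule sum.cong[OF refl])
    fix X assume X: "X \<in> V"
    have "(\<Sum>Y\<in>V. a X Y * f X * f Y) = f X * (\<Sum>Y\<in>V. a X Y * f Y)"
      by (simp add: sum_distrib_left mult_ac)
    thus "f X * (\<Sum>Y\<in>V. johnson_norm_laplacian n j X Y * f Y) = f X * f X - (\<Sum>Y\<in>V. a X Y * f X * f Y) / d"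
      unfolding Lrow[OF X] by (simp add: right_diff_distrib)
  qed
  also have "\<dots> = (\<Sum>X\<in>V. (\<Sum>Y\<in>V. a X Y * (f X * (f X - f Y)))) / d"
  proof -
    have "f X * f X = (\<Sum>Y\<in>V. a X Y * f X * f X) / d" if "X \<in> V" for X
      using deg[OF that] d0 by (simp add: sum_distrib_right[symmetric])
    hence "(\<Sum>X\<in>V. f X * f X - (\<Sum>Y\<in>V. a X Y * f X * f Y) / d)
        = (\<Sum>X\<in>V. ((\<Sum>Y\<in>V. a X Y * f X * f X) - (\<Sum>Y\<in>V. a X Y * f X * f Y)) / d)"
      by (intro sum.cong refl) (simp add: diff_divide_distrib)
    also have "\<dots> = (\<Sum>X\<in>V. (\<Sum>Y\<in>V. a X Y * (f X * (f X - f Y)))) / d"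
      by (simp add: sum_divide_distrib[symmetric] sum_subtractf[symmetric] algebra_simps)
    finally show ?thesis .
  qed
  also have "(\<Sum>X\<in>V. (\<Sum>Y\<in>V. a X Y * (f X * (f X - f Y))))
      = (\<Sum>X\<in>V. \<Sum>Y\<in>V. a X Y * (if X \<in> \<A> \<and> Y \<notin> \<A> then 1 else 0))
        - \<mu> * ((\<Sum>X\<in>V. \<Sum>Y\<in>V. a X Y * i X) - (\<Sum>X\<in>V. \<Sum>Y\<in>V. a X Y * i Y))"
  proof -
    have pw: "a X Y * (f X * (f X - f Y)) = a X Y * (if X \<in> \<A> \<and> Y \<notin> \<A> then 1 else 0) - \<mu> * (a X Y * i X - a X Y * i Y)" for X Y
      unfolding f_def i_def by (auto simp: algebra_simps)
    show ?thesis unfolding pw by (simp add: sum_subtractf sum_distrib_left right_diff_distrib)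
  qed
  also have "(\<Sum>X\<in>V. \<Sum>Y\<in>V. a X Y * i X) = (\<Sum>X\<in>V. \<Sum>Y\<in>V. a X Y * i Y)"
    by (subst sum.swap) (simp add: asym)
  also have "(\<Sum>X\<in>V. \<Sum>Y\<in>V. a X Y * (if X \<in> \<A> \<and> Y \<notin> \<A> then 1 else 0))
      = real (card {(A, B) \<in> V \<times> V. card (symdiff A B) = 2 * j \<and> A \<in> \<A> \<and> B \<notin> \<A>})"
    unfolding card_pairs_sum[OF finV] a_def by (intro sum.cong refl) auto
  finally show ?thesis by simp
qed

lemma f_props:
  fixes V :: "'a set" and \<A> :: "'a set"
  assumes finV: "finite V" and AV: "\<A> \<subseteq> V" and N0: "card V > 0"
  defines "\<mu> \<equiv> real (card \<A>) / real (card V)"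
  defines "f \<equiv> (\<lambda>X. (if X \<in> \<A> then 1 else 0) - \<mu>)"
  shows "(\<Sum>X\<in>V. f X) = 0" and "(\<Sum>X\<in>V. (f X)^2) = \<mu> * (1 - \<mu>) * real (card V)"
proof -
  have ind: "(\<Sum>X\<in>V. (if X \<in> \<A> then 1 else 0 :: real)) = real (card \<A>)" by (rule indicator_sum[OF finV AV])
  have cA: "real (card \<A>) = \<mu> * real (card V)" unfolding \<mu>_def using N0 by simp
  show "(\<Sum>X\<in>V. f X) = 0" unfolding f_def using ind cA by (simp add: sum_subtractf)
  have "(\<Sum>X\<in>V. (f X)^2) = (\<Sum>X\<in>V. (if X \<in> \<A> then 1 else 0) * (1 - 2 * \<mu>) + \<mu>^2)"
    unfolding f_def by (intro sum.cong refl) (auto simp: power2_eq_square algebra_simps)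
  also have "\<dots> = real (card \<A>) * (1 - 2 * \<mu>) + real (card V) * \<mu>^2"
    using ind by (simp add: sum.distrib sum_distrib_right[symmetric])
  also have "\<dots> = \<mu> * (1 - \<mu>) * real (card V)" unfolding cA by (simp add: power2_eq_square algebra_simps)
  finally show "(\<Sum>X\<in>V. (f X)^2) = \<mu> * (1 - \<mu>) * real (card V)" .
qed

lemma lap_row_sum:
  assumes nk: "n = 2 * k" and jk: "j \<le> k" and X: "X \<in> johnson_vertices n k"
  shows "(\<Sum>Y\<in>johnson_vertices n k. johnson_norm_laplacian n j X Y) = 0"
proof -
  let ?V = "johnson_vertices n k"
  have finV: "finite ?V" by (rule johnson_vertices_finite)
  have ndiv: "n div 2 = k" using nk by simp
  define d where "d = real ((k choose j)^2)"
  have d0: "d > 0" unfolding d_def using jk by simp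
  have "(\<Sum>Y\<in>?V. johnson_norm_laplacian n j X Y)
      = (\<Sum>Y\<in>?V. (if X = Y then 1 else 0) - (if card (symdiff X Y) = 2 * j then 1 else 0) / d)"
    unfolding johnson_norm_laplacian_def johnson_adjmat_def johnson_adj_def ndiv d_def[symmetric]
    by (rule sum.cong[OF refl]) auto
  also have "\<dots> = 1 - real (card {Y \<in> ?V. card (symdiff X Y) = 2 * j}) / d"
    using finV X by (simp add: sum_subtractf sum_divide_distrib[symmetric] sum_if_card)
  also have "\<dots> = 0" using nb_card[OF nk X, of j] d0 unfolding d_def by simp
  finally show ?thesis .
qed

lemma lap_sym: "johnson_norm_laplacian n j X Y = johnson_norm_laplacian n j Y X"
  unfolding johnson_norm_laplacian_def johnson_adjmat_def johnson_adj_def by (auto simp: symdiff_comm)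

theorem corollary3:
  fixes n j :: nat and \<A> :: "nat set set"
  assumes "even n" and "n > 0" and "j > 0"
    and "real j / real n \<le> 1/10"
    and "\<A> \<subseteq> johnson_vertices n (n div 2)"
  defines "V \<equiv> johnson_vertices n (n div 2)"
    and "d \<equiv> real (((n div 2) choose j)^2)"
    and "\<eta> \<equiv> real j / real n"
    and "\<mu> \<equiv> real (card \<A>) / real (n choose (n div 2))"
  shows "card {(A, B) \<in> V \<times> V. card (symdiff A B) = 2 * j \<and> A \<in> \<A> \<and> B \<notin> \<A>}
           = johnson_e n (n div 2) j \<A> (V - \<A>)
       \<and> real (johnson_e n (n div 2) j \<A> (V - \<A>))
           \<ge> d * mu2_tilde n j * \<mu> * (1 - \<mu>) * real (n choose (n div 2))
       \<and> d * mu2_tilde n j * \<mu> * (1 - \<mu>) * real (n choose (n div 2))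
           \<ge> 1/2 * \<eta> * \<mu> * (1 - \<mu>) * d * real (n choose (n div 2))
       \<and> real (card {(A, B) \<in> V \<times> V. card (symdiff A B) = 2 * j \<and> A \<in> \<A> \<and> B \<notin> \<A>})
           / real (card {(A, B) \<in> V \<times> V. card (symdiff A B) = 2 * j})
           \<ge> 1/2 * \<eta> * \<mu> * (1 - \<mu>)"
proof -
  define k where "k = n div 2"
  have nk: "n = 2 * k" using assms(1) unfolding k_def by simp
  have AV: "\<A> \<subseteq> johnson_vertices n k" using assms(5) unfolding k_def .
  have Vk: "V = johnson_vertices n k" unfolding V_def k_def ..
  have jn: "10 * j \<le> n"
  proof -
    have "real j \<le> real n / 10" using assms(4) assms(2) by (simp add: divide_le_eq field_simps)
    thus ?thesis by linarith
  qed
  have j1: "1 \<le> j" using assms(3) by simp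
  have jk: "8 * j \<le> 7 * k" using jn nk by linarith
  have jk': "j \<le> k" using jk by linarith
  have k1: "1 \<le> k" using jn nk j1 by linarith
  have finV: "finite V" unfolding V_def by (rule johnson_vertices_finite)
  have cardV: "card V = n choose k" unfolding Vk by (rule johnson_vertices_card)
  have N2: "card V \<ge> 2"
  proof -
    have "n choose k = ((n - 1) choose (k - 1)) + ((n - 1) choose k)"
      using nk k1 by (intro choose_reduce_nat) auto
    moreover have "(n - 1) choose (k - 1) > 0" "(n - 1) choose k > 0" using nk k1 by auto
    ultimately show ?thesis unfolding cardV by linarith
  qed
  define L where "L = johnson_norm_laplacian n j"
  have symL: "L x y = L y x" if "x \<in> V" "y \<in> V" for x y unfolding L_def by (rule lap_sym)
  define es where "es = eigenvalues_sorted V L"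
  obtain u where len: "length es = card V" and sorted: "sorted es"
    and orth: "\<forall>i<card V. \<forall>l<card V. (\<Sum>x\<in>V. u i x * u l x) = (if i = l then 1 else 0)"
    and compl: "\<forall>x\<in>V. \<forall>y\<in>V. (\<Sum>i<card V. u i x * u i y) = (if x = y then 1 else 0)"
    and eig: "\<forall>i<card V. \<forall>x\<in>V. (\<Sum>y\<in>V. L x y * u i y) = es ! i * u i x"
    using spectral_fun[of V L, OF finV symL] unfolding es_def by blast
  have mu2: "mu2_tilde n j = es ! 1" unfolding mu2_tilde_def es_def L_def V_def ..
  define c where "c = real j / (4 * real k)"
  have c_eta: "c = \<eta> / 2" unfolding c_def \<eta>_def nk by simp
  have c0: "c > 0" unfolding c_def using j1 k1 by simp
  have gap: "es ! 1 \<ge> c"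
  proof (rule ccontr)
    assume "\<not> es ! 1 \<ge> c"
    hence e1: "es ! 1 < c" by simp
    have "es ! 0 \<le> es ! 1" using sorted_nth_mono[OF sorted, of 0 1] len N2 by simp
    hence e0: "es ! 0 < c" using e1 by simp
    have const: "u i X = u i Y" if i: "i < 2" and X: "X \<in> V" and Y: "Y \<in> V" for i X Y
    proof (rule eig_const[OF nk j1 jk])
      show "(\<Sum>Y\<in>johnson_vertices n k. johnson_norm_laplacian n j X Y * u i Y) = es ! i * u i X"
        if "X \<in> johnson_vertices n k" for X
        using eig that i N2 unfolding L_def Vk by auto
      show "es ! i < real j / (4 * real k)" using e0 e1 i unfolding c_def by (cases i) auto
    qed (use X Y Vk in auto)
    obtain X0 where X0: "X0 \<in> V" using N2 by (metis card.empty ex_in_conv not_numeral_le_zero)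
    have s: "(\<Sum>x\<in>V. u i x * u l x) = real (card V) * (u i X0 * u l X0)" if "i < 2" "l < 2" for i l
    proof -
      have "(\<Sum>x\<in>V. u i x * u l x) = (\<Sum>x\<in>V. u i X0 * u l X0)"
        by (intro sum.cong refl) (use const that X0 in metis)
      thus ?thesis by simp
    qed
    have "real (card V) * (u 0 X0 * u 1 X0) = 0" using orth N2 s[of 0 1] by auto
    moreover have "real (card V) * (u 0 X0 * u 0 X0) = 1" using orth N2 s[of 0 0] by auto
    moreover have "real (card V) * (u 1 X0 * u 1 X0) = 1" using orth N2 s[of 1 1] by auto
    ultimately show False by auto
  qed
  have N0: "card V > 0" using N2 by simp
  have muV: "\<mu> = real (card \<A>) / real (card V)" unfolding \<mu>_def cardV k_def ..
  define f where "f = (\<lambda>X. (if X \<in> \<A> then 1 else 0) - \<mu>)"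
  have AV': "\<A> \<subseteq> V" using AV Vk by simp
  have fsum: "(\<Sum>X\<in>V. f X) = 0" and fsq: "(\<Sum>X\<in>V. (f X)^2) = \<mu> * (1 - \<mu>) * real (card V)"
    using f_props[OF finV AV' N0] unfolding f_def muV by auto
  have rows: "(\<Sum>y\<in>V. L x y) = 0" if "x \<in> V" for x
    unfolding L_def Vk by (rule lap_row_sum[OF nk jk']) (use that Vk in simp)
  have pos: "es ! 1 > 0" using gap c0 by simp
  have ray: "(\<Sum>x\<in>V. f x * (\<Sum>y\<in>V. L x y * f y)) \<ge> es ! 1 * (\<Sum>x\<in>V. (f x)^2)"
    by (rule rayleigh_second[OF finV N2 symL rows len sorted compl eig pos fsum])
  define eo where "eo = card {(A, B) \<in> V \<times> V. card (symdiff A B) = 2 * j \<and> A \<in> \<A> \<and> B \<notin> \<A>}"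
  have dk: "d = real ((k choose j)^2)" unfolding d_def k_def ..
  have d0: "d > 0" unfolding dk using jk' by simp
  have quad: "(\<Sum>x\<in>V. f x * (\<Sum>y\<in>V. L x y * f y)) = real eo / d"
    unfolding L_def eo_def dk f_def muV Vk by (rule quad_form[OF nk AV jk'])
  have part1: "eo = johnson_e n (n div 2) j \<A> (V - \<A>)"
    unfolding eo_def V_def by (rule claim1[OF assms(5)])
  have N: "real (n choose (n div 2)) = real (card V)" using cardV k_def by simp
  have main2: "real eo \<ge> d * es ! 1 * \<mu> * (1 - \<mu>) * real (card V)"
  proof -
    have "real eo / d \<ge> es ! 1 * (\<mu> * (1 - \<mu>) * real (card V))" using ray quad fsq by simp
    hence "real eo \<ge> d * (es ! 1 * (\<mu> * (1 - \<mu>) * real (card V)))" using d0 by (simp add: pos_le_divide_eq mult.commute)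
    thus ?thesis by (simp add: mult_ac)
  qed
  have mu01: "0 \<le> \<mu>" "\<mu> \<le> 1"
  proof -
    have "card \<A> \<le> card V" by (rule card_mono[OF finV AV'])
    thus "0 \<le> \<mu>" "\<mu> \<le> 1" unfolding muV using N0 by auto
  qed
  have prodnn: "0 \<le> \<mu> * (1 - \<mu>) * d * real (card V)" using mu01 d0 by simp
  have part3: "d * es ! 1 * \<mu> * (1 - \<mu>) * real (card V) \<ge> 1/2 * \<eta> * \<mu> * (1 - \<mu>) * d * real (card V)"
  proof -
    have "1/2 * \<eta> \<le> es ! 1" using gap c_eta by simp
    hence "1/2 * \<eta> * (\<mu> * (1 - \<mu>) * d * real (card V)) \<le> es ! 1 * (\<mu> * (1 - \<mu>) * d * real (card V))"
      by (rule mult_right_mono) (rule prodnn)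
    thus ?thesis by (simp add: mult_ac)
  qed
  have den: "real (card {(A, B) \<in> V \<times> V. card (symdiff A B) = 2 * j}) = real (card V) * d"
  proof -
    have "real (card {(A, B) \<in> V \<times> V. card (symdiff A B) = 2 * j})
        = (\<Sum>A\<in>V. \<Sum>B\<in>V. if card (symdiff A B) = 2 * j then 1 else 0)"
      by (rule card_pairs_sum[OF finV])
    also have "\<dots> = (\<Sum>A\<in>V. d)"
    proof (rule sum.cong[OF refl])
      fix A assume A: "A \<in> V"
      show "(\<Sum>B\<in>V. if card (symdiff A B) = 2 * j then 1 else 0) = d"
        using nb_card[OF nk A[unfolded Vk], of j] finV unfolding dk Vk by (simp add: sum_if_card)
    qed
    finally show ?thesis by simp
  qed
  have part4: "real eo / real (card {(A, B) \<in> V \<times> V. card (symdiff A B) = 2 * j}) \<ge> 1/2 * \<eta> * \<mu> * (1 - \<mu>)"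
  proof -
    have Nd: "real (card V) * d > 0" using N0 d0 by simp
    have "real eo \<ge> 1/2 * \<eta> * \<mu> * (1 - \<mu>) * (real (card V) * d)"
      using main2 part3 by (simp add: mult_ac)
    thus ?thesis unfolding den using Nd by (simp add: pos_le_divide_eq)
  qed
  show ?thesis
    using part1 main2 part3 part4 unfolding N mu2 eo_def[symmetric] by simp
qed

end
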